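(* Let $d,k\ge 1$, let $A\in\mathbb{R}^{k\times d}$ (a linear "style extractor"), let $y_1\in\mathbb{R}^k$ (reference style features), let $x_0\in\mathbb{R}^d$ and let $\gamma>0$. Consider the deterministic optimal control problem on the time interval $[0,1]$ $$\min_{u\in\mathcal{U}}\ \int_{0}^{1}\frac12\|u(X^u_t,t)\|^2\,dt+\frac{\gamma}{2}\|AX^u_1-y_1\|_2^2,\qquad\text{where } \mathrm{d}X^u_t=\big[X^u_t+u(X^u_t,t)\big]\,\mathrm{d}t,\quad X^u_{0}=x_0 .$$ Let $V^*(x,t)$ be the value function of this problem and write $\mathbf{p}_t=\nabla_x V^*(x,t)$ evaluated along the optimal trajectory. Then the optimal controller is $u^*(t)=-\mathbf{p}_t$, where the instantaneous optimal state $X^u_t=\mathbf{x}_t$ (with terminal state $\mathbf{x}_1$) and $\mathbf{p}_t$ satisfy $$\begin{bmatrix}\mathbf{x}_t\\ \mathbf{p}_t\end{bmatrix}=\begin{bmatrix} x_0e^{t}-\frac{\gamma}{2}A^T(A\mathbf{x}_1-y_1)e^{1+t}+\frac{\gamma}{2}A^T(A\mathbf{x}_1-y_1)e^{1-t}\\ \gamma A^T(A\mathbf{x}_1-y_1)e^{1-t}\end{bmatrix}.$$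
   Context: $\mathcal{U}$ denotes the admissible set of (feedback) controllers $u:\mathbb{R}^d\times[0,1]\to\mathbb{R}^d$, and $X^u_t$ is the state trajectory generated by the stated dynamics. The value function is $V^*(x,t)=\min_{u\in\mathcal{U}}\big[\int_t^1\frac12\|u(X^u_s,s)\|^2ds+\frac{\gamma}{2}\|AX^u_1-y_1\|_2^2\big]$ with $X^u_t=x$; it is assumed to have continuous partial derivatives so that it satisfies the Hamilton–Jacobi–Bellman equation $-\partial_t V^*(x,t)=\min_u\big[\frac12\|u\|^2+\nabla_xV^*(x,t)^T(x+u)\big]$. *)

theory Defs
  imports "HOL-Analysis.Analysis"
begin

text \<open>Feedback controllers u : R^d x [0,1] -> R^d are functions
  real^'d => real => real^'d (only their values for times in [0,1] matter).\<close>

definition traj :: "(real^'d \<Rightarrow> real \<Rightarrow> real^'d) \<Rightarrow> real^'d \<Rightarrow> real \<Rightarrow> (real \<Rightarrow> real^'d) \<Rightarrow> bool" where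
  "traj u x t X \<longleftrightarrow> X t = x \<and>
     (\<forall>s\<in>{t..1}. (X has_vector_derivative (X s + u (X s) s)) (at s within {t..1}))"

definition admissible :: "(real^'d \<Rightarrow> real \<Rightarrow> real^'d) \<Rightarrow> bool" where
  "admissible u \<longleftrightarrow> (\<forall>x. \<forall>t\<in>{0..1}.
      (\<exists>X. traj u x t X) \<and>
      (\<forall>X Y. traj u x t X \<and> traj u x t Y \<longrightarrow> (\<forall>s\<in>{t..1}. X s = Y s)) \<and>
      (\<forall>X. traj u x t X \<longrightarrow> (\<lambda>s. norm (u (X s) s) ^ 2) integrable_on {t..1}))"

definition state :: "(real^'d \<Rightarrow> real \<Rightarrow> real^'d) \<Rightarrow> real^'d \<Rightarrow> real \<Rightarrow> real \<Rightarrow> real^'d" where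
  "state u x t = (SOME X. traj u x t X)"

definition cost :: "real^'d^'k \<Rightarrow> real^'k \<Rightarrow> real \<Rightarrow> (real^'d \<Rightarrow> real \<Rightarrow> real^'d) \<Rightarrow> real^'d \<Rightarrow> real \<Rightarrow> real" where
  "cost A y1 \<gamma> u x t =
     integral {t..1} (\<lambda>s. (1/2) * norm (u (state u x t s) s) ^ 2)
     + (\<gamma>/2) * norm (A *v state u x t 1 - y1) ^ 2"

definition value_fun :: "real^'d^'k \<Rightarrow> real^'k \<Rightarrow> real \<Rightarrow> real^'d \<Rightarrow> real \<Rightarrow> real" where
  "value_fun A y1 \<gamma> x t = (INF u\<in>{u. admissible u}. cost A y1 \<gamma> u x t)"

end

theory Submission
  imports Defs
begin


lemma neg_zero:
  fixes f :: "real \<Rightarrow> real"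
  assumes fi: "(f has_integral 0) S" and nn: "\<And>x. x \<in> S \<Longrightarrow> 0 \<le> f x"
  shows "negligible {x\<in>S. f x \<noteq> 0}"
proof -
  have ai: "f absolutely_integrable_on S"
    using fi nn nonnegative_absolutely_integrable_1 by (blast intro: has_integral_integrable)
  hence int: "integrable lebesgue (\<lambda>x. indicator S x *\<^sub>R f x)"
    by (simp add: set_integrable_def)
  have "(LINT x:S | lebesgue. f x) = integral S f"
    using set_lebesgue_integral_eq_integral(2)[OF ai] .
  also have "\<dots> = 0" using fi by (simp add: integral_unique)
  finally have "integral\<^sup>L lebesgue (\<lambda>x. indicator S x *\<^sub>R f x) = 0"
    by (simp add: set_lebesgue_integral_def)
  moreover have "AE x in lebesgue. 0 \<le> indicator S x *\<^sub>R f x"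
    using nn by (auto simp: indicator_def)
  ultimately have "AE x in lebesgue. indicator S x *\<^sub>R f x = 0"
    using integral_nonneg_eq_0_iff_AE[OF int] by blast
  then obtain N where N: "{x\<in>space lebesgue. \<not> (indicator S x *\<^sub>R f x = 0)} \<subseteq> N"
     "emeasure lebesgue N = 0" "N \<in> sets lebesgue"
    by (rule AE_E)
  have "{x\<in>S. f x \<noteq> 0} \<subseteq> N" using N(1) by (auto simp: indicator_def)
  moreover have "negligible N" using N(2,3) by (simp add: negligible_iff_emeasure0)
  ultimately show ?thesis using negligible_subset by blast
qed

lemma ode_uniq:
  fixes X Y :: "real \<Rightarrow> 'a::euclidean_space"
  assumes "t \<le> b"
    and dX: "\<And>s. s \<in> {t..b} \<Longrightarrow> (X has_vector_derivative (X s + c s)) (at s within {t..b})"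
    and dY: "\<And>s. s \<in> {t..b} \<Longrightarrow> (Y has_vector_derivative (Y s + c s)) (at s within {t..b})"
    and eq: "X t = Y t"
    and s: "s \<in> {t..b}"
  shows "X s = Y s"
proof -
  define F where "F s = exp (- s) *\<^sub>R (X s - Y s)" for s
  have dF: "(F has_vector_derivative 0) (at r within {t..s})" if r: "r \<in> {t..s}" for r
  proof -
    have r': "r \<in> {t..b}" using r s by auto
    have sub: "{t..s} \<subseteq> {t..b}" using s by auto
    have "(F has_vector_derivative (exp (- r) *\<^sub>R ((X r + c r) - (Y r + c r)) + (- exp (- r)) *\<^sub>R (X r - Y r))) (at r within {t..s})"
      unfolding F_def
    proof (rule has_vector_derivative_scaleR)
      show "((\<lambda>s. exp (- s)) has_real_derivative - exp (- r)) (at r within {t..s})"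
        by (auto intro!: derivative_eq_intros)
      show "((\<lambda>s. X s - Y s) has_vector_derivative (X r + c r) - (Y r + c r)) (at r within {t..s})"
        by (rule has_vector_derivative_diff has_vector_derivative_within_subset[OF dX[OF r'] sub]
          has_vector_derivative_within_subset[OF dY[OF r'] sub])+
    qed
    moreover have "exp (- r) *\<^sub>R ((X r + c r) - (Y r + c r)) + (- exp (- r)) *\<^sub>R (X r - Y r) = 0"
      by (simp add: algebra_simps)
    ultimately show ?thesis by simp
  qed
  have "((\<lambda>_. 0) has_integral F s - F t) {t..s}"
    using fundamental_theorem_of_calculus[of t s F "\<lambda>_. 0"] dF s by auto
  hence "F s = F t" by (simp add: has_integral_0_eq)
  also have "F t = 0" by (simp add: F_def eq)
  finally show ?thesis by (simp add: F_def)
qed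

lemma ode_exist:
  fixes c :: "real \<Rightarrow> real^'d"
  assumes cc: "continuous_on {t..1} c" and t: "t \<le> 1"
  shows "traj (\<lambda>x s. c s) x t (\<lambda>s. exp s *\<^sub>R (exp (- t) *\<^sub>R x + integral {t..s} (\<lambda>r. exp (- r) *\<^sub>R c r)))"
  unfolding traj_def
proof (intro conjI ballI)
  have I0: "integral {t..t} (\<lambda>r. exp (- r) *\<^sub>R c r) = 0"
    by (rule integral_unique, rule has_integral_null_real) (simp only: content_real_eq_0 order_refl)
  show "exp t *\<^sub>R (exp (- t) *\<^sub>R x + integral {t..t} (\<lambda>r. exp (- r) *\<^sub>R c r)) = x"
    unfolding I0 by (simp add: exp_minus)
next
  fix s assume s: "s \<in> {t..1}"
  have ce: "continuous_on {t..1} (\<lambda>r. exp (- r) *\<^sub>R c r)"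
    by (intro continuous_intros cc)
  have "((\<lambda>s. exp s *\<^sub>R (exp (- t) *\<^sub>R x + integral {t..s} (\<lambda>r. exp (- r) *\<^sub>R c r))) has_vector_derivative
     exp s *\<^sub>R (0 + exp (- s) *\<^sub>R c s) + exp s *\<^sub>R (exp (- t) *\<^sub>R x + integral {t..s} (\<lambda>r. exp (- r) *\<^sub>R c r))) (at s within {t..1})"
  proof (rule has_vector_derivative_scaleR)
    show "(exp has_real_derivative exp s) (at s within {t..1})"
      by (rule DERIV_subset[OF DERIV_exp]) auto
    show "((\<lambda>s. exp (- t) *\<^sub>R x + integral {t..s} (\<lambda>r. exp (- r) *\<^sub>R c r)) has_vector_derivative
       0 + exp (- s) *\<^sub>R c s) (at s within {t..1})"
      by (rule has_vector_derivative_add[OF has_vector_derivative_const integral_has_vector_derivative[OF ce s]])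
  qed
  moreover have "exp s *\<^sub>R (0 + exp (- s) *\<^sub>R c s) = c s" by (simp add: exp_minus)
  ultimately show "((\<lambda>s. exp s *\<^sub>R (exp (- t) *\<^sub>R x + integral {t..s} (\<lambda>r. exp (- r) *\<^sub>R c r))) has_vector_derivative
     exp s *\<^sub>R (exp (- t) *\<^sub>R x + integral {t..s} (\<lambda>r. exp (- r) *\<^sub>R c r)) + c s) (at s within {t..1})"
    by (simp add: add.commute)
qed

lemma adm_open:
  fixes c :: "real \<Rightarrow> real^'d"
  assumes cc: "continuous_on {0..1} c"
  shows "admissible (\<lambda>x s. c s)"
  unfolding admissible_def
proof (intro allI ballI conjI)
  fix x :: "real^'d" and t :: real assume t: "t \<in> {0..1}"
  have cc': "continuous_on {t..1} c" using cc t by (auto intro: continuous_on_subset)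
  show "\<exists>X. traj (\<lambda>x s. c s) x t X" using ode_exist[OF cc'] t by auto
next
  fix x :: "real^'d" and t :: real and X Y assume t: "t \<in> {0..1}"
  show "traj (\<lambda>x s. c s) x t X \<and> traj (\<lambda>x s. c s) x t Y \<longrightarrow> (\<forall>s\<in>{t..1}. X s = Y s)"
  proof (intro impI ballI)
    fix s
    assume "traj (\<lambda>x s. c s) x t X \<and> traj (\<lambda>x s. c s) x t Y"
    then have a: "X t = x" "Y t = x"
      and dX: "\<And>s. s \<in> {t..1} \<Longrightarrow> (X has_vector_derivative (X s + c s)) (at s within {t..1})"
      and dY: "\<And>s. s \<in> {t..1} \<Longrightarrow> (Y has_vector_derivative (Y s + c s)) (at s within {t..1})"
      unfolding traj_def by blast+
    assume s: "s \<in> {t..1}"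
    show "X s = Y s"
      by (rule ode_uniq[of t 1 X c Y, OF _ dX dY _ s]) (use t a in auto)
  qed
next
  fix x :: "real^'d" and t :: real and X assume t: "t \<in> {0..1}"
  have cc': "continuous_on {t..1} c" using cc t by (auto intro: continuous_on_subset)
  show "traj (\<lambda>x s. c s) x t X \<longrightarrow> (\<lambda>s. norm (c s) ^ 2) integrable_on {t..1}"
    by (intro impI integrable_continuous_interval continuous_intros cc')
qed


lemma cost_nonneg:
  assumes "\<gamma> > 0"
  shows "0 \<le> cost A y1 \<gamma> u x t"
proof -
  have "0 \<le> integral {t..1} (\<lambda>s. (1/2) * norm (u (state u x t s) s) ^ 2)"
  proof (cases "(\<lambda>s. (1/2) * norm (u (state u x t s) s) ^ 2) integrable_on {t..1}")
    case True
    then show ?thesis by (rule integral_nonneg) auto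
  next
    case False
    then show ?thesis by (simp add: not_integrable_integral)
  qed
  then show ?thesis unfolding cost_def using assms by simp
qed

lemma value_le:
  assumes "\<gamma> > 0" and "admissible u"
  shows "value_fun A y1 \<gamma> x t \<le> cost A y1 \<gamma> u x t"
  unfolding value_fun_def
  by (rule cINF_lower) (use assms cost_nonneg in \<open>auto intro!: bdd_belowI2[where m=0]\<close>)

lemma value_one:
  fixes A :: "real^'d^'k" and y :: "real^'d"
  assumes adm: "admissible (u0 :: real^'d \<Rightarrow> real \<Rightarrow> real^'d)"
  shows "value_fun A y1 \<gamma> y 1 = \<gamma>/2 * norm (A *v y - y1) ^ 2"
proof -
  have I0: "integral {1..1} h = 0" for h :: "real \<Rightarrow> real"
    by (rule integral_unique, rule has_integral_null_real) (simp only: content_real_eq_0 order_refl)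
  have c: "cost A y1 \<gamma> u y 1 = \<gamma>/2 * norm (A *v y - y1) ^ 2" if u: "admissible u" for u
  proof -
    have "\<exists>X. traj u y 1 X" using u unfolding admissible_def by auto
    then have "traj u y 1 (state u y 1)" unfolding state_def by (rule someI_ex)
    then have "state u y 1 1 = y" unfolding traj_def by auto
    then show ?thesis unfolding cost_def I0 by simp
  qed
  have "value_fun A y1 \<gamma> y 1 = (INF u\<in>{u::real^'d \<Rightarrow> real \<Rightarrow> real^'d. admissible u}. \<gamma>/2 * norm (A *v y - y1) ^ 2)"
    unfolding value_fun_def by (rule arg_cong[where f=Inf], rule image_cong[OF refl]) (simp add: c)
  also have "\<dots> = \<gamma>/2 * norm (A *v y - y1) ^ 2"
    by (rule cINF_const) (use adm in auto)
  finally show ?thesis .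
qed



theorem proposition2:
  fixes A :: "real^'d^'k" and y1 :: "real^'k" and x0 :: "real^'d" and \<gamma> :: real
    and Vx :: "real^'d \<Rightarrow> real \<Rightarrow> real^'d" and Vt :: "real^'d \<Rightarrow> real \<Rightarrow> real"
    and ustar :: "real^'d \<Rightarrow> real \<Rightarrow> real^'d"
  assumes gamma_pos: "\<gamma> > 0"
    and V_deriv: "\<forall>x. \<forall>t\<in>{0..1}.
       ((\<lambda>(z, s). value_fun A y1 \<gamma> z s) has_derivative (\<lambda>(h, r). Vx x t \<bullet> h + Vt x t * r))
         (at (x, t) within UNIV \<times> {0..1})"
    and Vx_cont: "continuous_on (UNIV \<times> {0..1}) (\<lambda>(x, t). Vx x t)"
    and Vt_cont: "continuous_on (UNIV \<times> {0..1}) (\<lambda>(x, t). Vt x t)"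
    and HJB: "\<forall>x. \<forall>t\<in>{0<..<1}.
       (\<forall>v. - Vt x t \<le> (1/2) * norm v ^ 2 + Vx x t \<bullet> (x + v)) \<and>
       (\<exists>v. - Vt x t = (1/2) * norm v ^ 2 + Vx x t \<bullet> (x + v))"
    and ustar_adm: "admissible ustar"
    and ustar_opt: "cost A y1 \<gamma> ustar x0 0 = value_fun A y1 \<gamma> x0 0"
  shows "\<forall>t\<in>{0..1}.
     ustar (state ustar x0 0 t) t = - Vx (state ustar x0 0 t) t \<and>
     state ustar x0 0 t =
        exp t *\<^sub>R x0
        - (\<gamma>/2 * exp (1 + t)) *\<^sub>R (transpose A *v (A *v state ustar x0 0 1 - y1))
        + (\<gamma>/2 * exp (1 - t)) *\<^sub>R (transpose A *v (A *v state ustar x0 0 1 - y1)) \<and>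
     Vx (state ustar x0 0 t) t =
        (\<gamma> * exp (1 - t)) *\<^sub>R (transpose A *v (A *v state ustar x0 0 1 - y1))"
proof -
  define X where "X = state ustar x0 0"
  define w where "w s = ustar (X s) s" for s
  define V where "V = value_fun A y1 \<gamma>"
  define g where "g y = \<gamma>/2 * norm (A *v y - y1) ^ 2" for y
  define P where "P s = Vx (X s) s" for s
  have "\<exists>X. traj ustar x0 0 X" using ustar_adm unfolding admissible_def by auto
  hence trX: "traj ustar x0 0 X" unfolding X_def state_def by (rule someI_ex)
  hence X0: "X 0 = x0" and Xd: "\<And>s. s\<in>{0..1} \<Longrightarrow> (X has_vector_derivative (X s + w s)) (at s within {0..1})"
    unfolding traj_def w_def by auto
  have Xcont: "continuous_on {0..1} X"
    unfolding continuous_on_eq_continuous_within using Xd has_vector_derivative_continuous by blast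
  have wint: "(\<lambda>s. norm (w s)^2) integrable_on {0..1}"
    using ustar_adm trX unfolding admissible_def w_def by auto
  have V1: "V y 1 = g y" for y
    unfolding V_def g_def by (rule value_one[OF ustar_adm])
  have VX0: "V x0 0 = integral {0..1} (\<lambda>s. (1/2) * norm (w s)^2) + g (X 1)"
    using ustar_opt unfolding cost_def V_def g_def w_def X_def by simp
  have dPhi: "((\<lambda>s. V (X s) s) has_vector_derivative (P s \<bullet> (X s + w s) + Vt (X s) s)) (at s within {0..1})"
    if s: "s \<in> {0..1}" for s
  proof -
    have f: "((\<lambda>s. (X s, s)) has_derivative (\<lambda>h. (h *\<^sub>R (X s + w s), h))) (at s within {0..1})"
      using Xd[OF s] unfolding has_vector_derivative_def by (intro has_derivative_Pair has_derivative_ident)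
    have gd: "((\<lambda>(z, s). V z s) has_derivative (\<lambda>(h, r). Vx (fst z) (snd z) \<bullet> h + Vt (fst z) (snd z) * r)) (at z within UNIV \<times> {0..1})"
      if "z \<in> UNIV \<times> {0..1}" for z
      using V_deriv that unfolding V_def by (cases z) auto
    have "((\<lambda>s. (\<lambda>(z, s). V z s) (X s, s)) has_derivative
       (\<lambda>y. (\<lambda>(h, r). Vx (fst (X s, s)) (snd (X s, s)) \<bullet> h + Vt (fst (X s, s)) (snd (X s, s)) * r) (y *\<^sub>R (X s + w s), y)))
       (at s within {0..1})"
      by (rule has_derivative_in_compose2[OF gd _ s f]) auto
    then have "((\<lambda>s. V (X s) s) has_derivative (\<lambda>y. Vx (X s) s \<bullet> (y *\<^sub>R (X s + w s)) + Vt (X s) s * y)) (at s within {0..1})"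
      by simp
    then show ?thesis unfolding has_vector_derivative_def P_def
      by (rule has_derivative_eq_rhs) (auto simp: fun_eq_iff algebra_simps)
  qed
  have I1: "((\<lambda>s. P s \<bullet> (X s + w s) + Vt (X s) s) has_integral (V (X 1) 1 - V x0 0)) {0..1}"
    using fundamental_theorem_of_calculus[of 0 1 "\<lambda>s. V (X s) s"] dPhi X0 by auto
  have key: "P s \<bullet> (X s + w s) + Vt (X s) s + (1/2) * norm (w s)^2 = (1/2) * norm (w s + P s)^2"
    if s: "s \<in> {0<..<1}" for s
  proof -
    from HJB s have h1: "- Vt (X s) s \<le> (1/2) * norm (- P s)^2 + P s \<bullet> (X s + - P s)"
      and h2: "\<exists>v. - Vt (X s) s = (1/2) * norm v^2 + P s \<bullet> (X s + v)"
      unfolding P_def by blast+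
    from h2 obtain v where hv: "- Vt (X s) s = (1/2) * norm v^2 + P s \<bullet> (X s + v)" by blast
    have "0 \<le> (v + P s) \<bullet> (v + P s)" by simp
    then have "Vt (X s) s = (1/2) * (P s \<bullet> P s) - P s \<bullet> X s"
      using h1 hv by (simp add: power2_norm_eq_inner inner_add_left inner_add_right inner_commute algebra_simps)
    then show ?thesis
      by (simp add: power2_norm_eq_inner inner_add_left inner_add_right inner_commute algebra_simps)
  qed
  have I2: "((\<lambda>s. P s \<bullet> (X s + w s) + Vt (X s) s + (1/2) * norm (w s)^2) has_integral
     (V (X 1) 1 - V x0 0 + integral {0..1} (\<lambda>s. (1/2) * norm (w s)^2))) {0..1}"
    by (intro has_integral_add I1 integrable_integral integrable_on_mult_right wint)
  then have I2': "((\<lambda>s. P s \<bullet> (X s + w s) + Vt (X s) s + (1/2) * norm (w s)^2) has_integral 0) {0..1}"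
    using V1 VX0 by simp
  have I3: "((\<lambda>s. (1/2) * norm (w s + P s)^2) has_integral 0) {0..1}"
  proof (rule has_integral_spike[OF _ _ I2'])
    show "negligible {0::real, 1}" by (rule negligible_finite) auto
    show "(1/2) * norm (w s + P s)^2 = P s \<bullet> (X s + w s) + Vt (X s) s + (1/2) * norm (w s)^2"
      if "s \<in> {0..1} - {0, 1}" for s
      using key[of s] that by auto
  qed
  define N where "N = {s\<in>{0..1}. (1/2) * norm (w s + P s)^2 \<noteq> 0}"
  have negN: "negligible N" unfolding N_def by (rule neg_zero[OF I3]) auto
  have ae: "w s = - P s" if "s \<in> {0..1}" "s \<notin> N" for s
    using that unfolding N_def by (auto simp: add_eq_0_iff2)
  have Pc: "continuous_on {0..1} P"
  proof -
    have "continuous_on {0..1} (\<lambda>s. (\<lambda>(x, t). Vx x t) (X s, s))"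
      by (rule continuous_on_compose2[OF Vx_cont continuous_on_Pair[OF Xcont continuous_on_id]]) auto
    then show ?thesis unfolding P_def by simp
  qed
  define f where "f s = X s - P s" for s
  have fc: "continuous_on {0..1} f" unfolding f_def by (intro continuous_intros Xcont Pc)
  have Xint: "X t = x0 + integral {0..t} f" if t: "t \<in> {0..1}" for t
  proof -
    have "((\<lambda>s. X s + w s) has_integral X t - X 0) {0..t}"
      by (rule fundamental_theorem_of_calculus)
         (use t in \<open>auto intro: has_vector_derivative_within_subset[OF Xd]\<close>)
    then have "(f has_integral X t - X 0) {0..t}"
    proof (rule has_integral_spike[OF negN, rotated])
      show "f s = X s + w s" if "s \<in> {0..t} - N" for s
        using that t ae[of s] unfolding f_def by auto
    qed
    then show ?thesis by (simp add: integral_unique X0)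
  qed
  have Xd2: "(X has_vector_derivative f t) (at t within {0..1})" if t: "t \<in> {0..1}" for t
  proof -
    have "((\<lambda>t. x0 + integral {0..t} f) has_vector_derivative (0 + f t)) (at t within {0..1})"
      by (intro has_vector_derivative_add has_vector_derivative_const integral_has_vector_derivative fc t)
    then show ?thesis
      by (intro has_vector_derivative_transform[OF t Xint]) auto
  qed
  have W1: "w t = - P t" if t: "t \<in> {0..1}" for t
  proof -
    have "X t + w t = f t"
      using vector_derivative_unique_within_closed_interval[of 0 1 t X "X t + w t" "f t"] Xd[OF t] Xd2[OF t] t
      by simp
    then have "P t + w t = 0" unfolding f_def by (simp add: algebra_simps)
    then show ?thesis by (metis add.commute eq_neg_iff_add_eq_0)
  qed
  have wc: "continuous_on {0..1} w"
    by (rule continuous_on_eq[OF continuous_on_minus[OF Pc]]) (use W1 in auto)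
  define v where "v = transpose A *v (A *v X 1 - y1)"
  define p1 where "p1 = \<gamma> *\<^sub>R v"
  define q where "q s = w s + exp (1 - s) *\<^sub>R p1" for s
  have qc: "continuous_on {0..1} q" unfolding q_def by (intro continuous_intros wc)
  define Y where "Y c = (\<lambda>s. exp s *\<^sub>R (exp (- 0) *\<^sub>R x0 + integral {0..s} (\<lambda>r. exp (- r) *\<^sub>R c r)))"
    for c :: "real \<Rightarrow> real^'d"
  have Ytraj: "traj (\<lambda>x s. c s) x0 0 (Y c)" if "continuous_on {0..1} c" for c
    using ode_exist[of 0 c x0] that unfolding Y_def by auto
  have uniq: "Z 1 = Z' 1" if "continuous_on {0..1} c" "traj (\<lambda>x s. c s) x0 0 Z" "traj (\<lambda>x s. c s) x0 0 Z'" for c Z Z'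
    using adm_open[OF that(1)] that(2,3) unfolding admissible_def by fastforce
  have stateY: "state (\<lambda>x s. c s) x0 0 1 = Y c 1" if c: "continuous_on {0..1} c" for c
  proof -
    have tr1: "traj (\<lambda>x s. c s) x0 0 (state (\<lambda>x s. c s) x0 0)"
      unfolding state_def by (rule someI[of "traj (\<lambda>x s. c s) x0 0", OF Ytraj[OF c]])
    show ?thesis by (rule uniq[OF c tr1 Ytraj[OF c]])
  qed
  have trXw: "traj (\<lambda>x s. w s) x0 0 X" unfolding traj_def using X0 Xd by auto
  have X1: "X 1 = Y w 1" by (rule uniq[OF wc trXw Ytraj[OF wc]])
  define Iq where "Iq = integral {0..1} (\<lambda>r. exp (- r) *\<^sub>R q r)"
  define Qv where "Qv = exp 1 *\<^sub>R Iq"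
  have Ylin: "Y (\<lambda>s. w s + \<epsilon> *\<^sub>R q s) 1 = X 1 + \<epsilon> *\<^sub>R Qv" for \<epsilon>
  proof -
    have i1: "(\<lambda>r. exp (- r) *\<^sub>R w r) integrable_on {0..1}"
      by (intro integrable_continuous_interval continuous_intros wc)
    have i2: "(\<lambda>r. \<epsilon> *\<^sub>R (exp (- r) *\<^sub>R q r)) integrable_on {0..1}"
      by (intro integrable_continuous_interval continuous_intros qc)
    have eq: "(\<lambda>r. exp (- r) *\<^sub>R (w r + \<epsilon> *\<^sub>R q r)) = (\<lambda>r. exp (- r) *\<^sub>R w r + \<epsilon> *\<^sub>R (exp (- r) *\<^sub>R q r))"
      by (auto simp: fun_eq_iff algebra_simps)
    have "integral {0..1} (\<lambda>r. exp (- r) *\<^sub>R (w r + \<epsilon> *\<^sub>R q r)) = integral {0..1} (\<lambda>r. exp (- r) *\<^sub>R w r) + \<epsilon> *\<^sub>R Iq"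
      unfolding eq integral_add[OF i1 i2] integral_cmul Iq_def ..
    then show ?thesis unfolding X1 Y_def Qv_def by (simp add: scaleR_add_right)
  qed
  have Jle: "V x0 0 \<le> integral {0..1} (\<lambda>s. (1/2) * norm (w s + \<epsilon> *\<^sub>R q s)^2) + g (X 1 + \<epsilon> *\<^sub>R Qv)" for \<epsilon>
  proof -
    have c: "continuous_on {0..1} (\<lambda>s. w s + \<epsilon> *\<^sub>R q s)" by (intro continuous_intros wc qc)
    have "V x0 0 \<le> cost A y1 \<gamma> (\<lambda>x s. w s + \<epsilon> *\<^sub>R q s) x0 0"
      unfolding V_def by (rule value_le[OF gamma_pos adm_open[OF c]])
    also have "\<dots> = integral {0..1} (\<lambda>s. (1/2) * norm (w s + \<epsilon> *\<^sub>R q s)^2) + g (X 1 + \<epsilon> *\<^sub>R Qv)"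
      unfolding cost_def g_def stateY[OF c] Ylin by simp
    finally show ?thesis .
  qed
  define b where "b = integral {0..1} (\<lambda>s. w s \<bullet> q s)"
  define a where "a = integral {0..1} (\<lambda>s. q s \<bullet> q s)"
  define Iqq where "Iqq = integral {0..1} (\<lambda>s. (1/2) * (q s \<bullet> q s))"
  define Iw where "Iw = integral {0..1} (\<lambda>s. (1/2) * norm (w s)^2)"
  have E1: "integral {0..1} (\<lambda>s. (1/2) * norm (w s + \<epsilon> *\<^sub>R q s)^2) = Iw + \<epsilon> * b + \<epsilon>^2 * Iqq" for \<epsilon>
  proof -
    have eq: "(\<lambda>s. (1/2) * norm (w s + \<epsilon> *\<^sub>R q s)^2) = (\<lambda>s. ((1/2) * norm (w s)^2 + \<epsilon> * (w s \<bullet> q s)) + \<epsilon>^2 * ((1/2) * (q s \<bullet> q s)))"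
      by (simp add: fun_eq_iff power2_norm_eq_inner) (simp add: inner_add_left inner_add_right inner_commute algebra_simps power2_eq_square)
    have i1: "(\<lambda>s. (1/2) * norm (w s)^2) integrable_on {0..1}"
      by (intro integrable_continuous_interval continuous_intros wc)
    have i2: "(\<lambda>s. \<epsilon> * (w s \<bullet> q s)) integrable_on {0..1}"
      by (intro integrable_continuous_interval continuous_intros wc qc)
    have i3: "(\<lambda>s. \<epsilon>^2 * ((1/2) * (q s \<bullet> q s))) integrable_on {0..1}"
      by (intro integrable_continuous_interval continuous_intros qc)
    show ?thesis
      unfolding eq integral_add[OF integrable_add[OF i1 i2] i3] integral_add[OF i1 i2] integral_mult_right
        Iw_def b_def Iqq_def ..
  qed
  have E2: "g (X 1 + \<epsilon> *\<^sub>R Qv) = g (X 1) + \<epsilon> * (\<gamma> * ((A *v X 1 - y1) \<bullet> (A *v Qv))) + \<epsilon>^2 * (\<gamma>/2 * norm (A *v Qv)^2)" for \<epsilon>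
  proof -
    have "A *v (X 1 + \<epsilon> *\<^sub>R Qv) - y1 = (A *v X 1 - y1) + \<epsilon> *\<^sub>R (A *v Qv)"
      by (simp add: matrix_vector_right_distrib matrix_vector_mult_scaleR algebra_simps)
    then show ?thesis unfolding g_def
      by (simp add: power2_norm_eq_inner) (simp add: inner_add_left inner_add_right inner_commute algebra_simps power2_eq_square)
  qed
  have E3: "b + \<gamma> * ((A *v X 1 - y1) \<bullet> (A *v Qv)) = a"
  proof -
    have e1: "\<gamma> * ((A *v X 1 - y1) \<bullet> (A *v Qv)) = p1 \<bullet> Qv"
      unfolding p1_def v_def by (simp add: transpose_matrix_vector dot_lmul_matrix)
    have iq: "(\<lambda>r. exp (- r) *\<^sub>R q r) integrable_on {0..1}"
      by (intro integrable_continuous_interval continuous_intros qc)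
    have "integral {0..1} ((\<lambda>z. p1 \<bullet> z) \<circ> (\<lambda>r. exp (- r) *\<^sub>R q r)) = p1 \<bullet> Iq"
      unfolding Iq_def by (rule integral_linear[OF iq bounded_linear_inner_right])
    then have F1: "integral {0..1} (\<lambda>r. exp 1 * (p1 \<bullet> (exp (- r) *\<^sub>R q r))) = exp 1 * (p1 \<bullet> Iq)"
      by (simp add: integral_mult_right o_def)
    have F2: "(\<lambda>r. exp 1 * (p1 \<bullet> (exp (- r) *\<^sub>R q r))) = (\<lambda>r. (exp (1 - r) *\<^sub>R p1) \<bullet> q r)"
      by (auto simp: fun_eq_iff mult.assoc[symmetric] mult_exp_exp)
    have e2: "p1 \<bullet> Qv = integral {0..1} (\<lambda>r. (exp (1 - r) *\<^sub>R p1) \<bullet> q r)"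
      by (simp only: Qv_def inner_scaleR_right F1[symmetric])
         (rule arg_cong[where f="integral {0..1}"], simp add: fun_eq_iff mult.assoc[symmetric] mult_exp_exp)
    have j1: "(\<lambda>s. w s \<bullet> q s) integrable_on {0..1}"
      by (intro integrable_continuous_interval continuous_intros wc qc)
    have j2: "(\<lambda>s. (exp (1 - s) *\<^sub>R p1) \<bullet> q s) integrable_on {0..1}"
      by (intro integrable_continuous_interval continuous_intros qc)
    have QQ: "(\<lambda>s. q s \<bullet> q s) = (\<lambda>s. w s \<bullet> q s + (exp (1 - s) *\<^sub>R p1) \<bullet> q s)"
      by (simp only: fun_eq_iff q_def inner_add_left) simp
    have "a = b + p1 \<bullet> Qv"
      by (simp only: a_def b_def e2 QQ integral_add[OF j1 j2])
    then show ?thesis using e1 by simp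
  qed
  define C where "C = Iqq + \<gamma>/2 * norm (A *v Qv)^2"
  have a_nn: "0 \<le> a" unfolding a_def
    by (rule integral_nonneg) (auto intro: integrable_continuous_interval continuous_intros qc)
  have C_nn: "0 \<le> C"
  proof -
    have "0 \<le> Iqq" unfolding Iqq_def
      by (rule integral_nonneg) (auto intro: integrable_continuous_interval continuous_intros qc)
    then show ?thesis unfolding C_def using gamma_pos by simp
  qed
  have quad: "0 \<le> \<epsilon> * a + \<epsilon>^2 * C" for \<epsilon>
  proof -
    have "Iw + g (X 1) \<le> Iw + \<epsilon> * b + \<epsilon>^2 * Iqq + (g (X 1) + \<epsilon> * (\<gamma> * ((A *v X 1 - y1) \<bullet> (A *v Qv))) + \<epsilon>^2 * (\<gamma>/2 * norm (A *v Qv)^2))"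
      using Jle[of \<epsilon>] VX0 E1[of \<epsilon>] E2[of \<epsilon>] unfolding Iw_def by simp
    then have "0 \<le> \<epsilon> * (b + \<gamma> * ((A *v X 1 - y1) \<bullet> (A *v Qv))) + \<epsilon>^2 * C"
      unfolding C_def by (simp add: algebra_simps)
    then show ?thesis unfolding E3 .
  qed
  have a0: "a = 0"
  proof -
    define ee where "ee = - a / (C + 1)"
    have D: "ee * (C + 1) = - a" unfolding ee_def using C_nn by simp
    have "(C + 1) ^ 2 * (ee * a + ee ^ 2 * C) = (ee * (C + 1)) * (C + 1) * a + (ee * (C + 1)) ^ 2 * C"
      by (simp add: power2_eq_square algebra_simps)
    also have "\<dots> = - (a ^ 2)" unfolding D by (simp add: power2_eq_square algebra_simps)
    finally have "(C + 1) ^ 2 * (ee * a + ee ^ 2 * C) = - (a ^ 2)" .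
    moreover have "0 \<le> (C + 1) ^ 2 * (ee * a + ee ^ 2 * C)" using quad[of ee] by simp
    ultimately show ?thesis by simp
  qed
  have qz: "q s = 0" if s: "s \<in> {0..1}" for s
  proof -
    have cq: "continuous_on {0..1} (\<lambda>s. q s \<bullet> q s)" by (intro continuous_intros qc)
    have "integral {0..1} (\<lambda>s. q s \<bullet> q s) = 0" using a0 unfolding a_def .
    then have "\<forall>s\<in>{0..1}. q s \<bullet> q s = 0"
      by (subst (asm) integral_eq_0_iff[OF cq]) auto
    then show ?thesis using s by simp
  qed
  have wform: "w s = - ((\<gamma> * exp (1 - s)) *\<^sub>R v)" if s: "s \<in> {0..1}" for s
  proof -
    have "w s + exp (1 - s) *\<^sub>R (\<gamma> *\<^sub>R v) = 0" using qz[OF s] unfolding q_def p1_def .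
    then have "w s = - (exp (1 - s) *\<^sub>R (\<gamma> *\<^sub>R v))" by (simp only: eq_neg_iff_add_eq_0)
    then show ?thesis by (simp add: mult.commute)
  qed
  show ?thesis
  proof (intro ballI conjI)
    fix t :: real assume t: "t \<in> {0..1}"
    show "ustar (state ustar x0 0 t) t = - Vx (state ustar x0 0 t) t"
      using W1[OF t] unfolding w_def P_def X_def by simp
    show "Vx (state ustar x0 0 t) t = (\<gamma> * exp (1 - t)) *\<^sub>R (transpose A *v (A *v state ustar x0 0 1 - y1))"
      using W1[OF t] wform[OF t] unfolding P_def X_def v_def by simp
    define Z where "Z t = exp t *\<^sub>R x0 - (\<gamma>/2 * exp (1 + t)) *\<^sub>R v + (\<gamma>/2 * exp (1 - t)) *\<^sub>R v" for t
    define \<psi> where "\<psi> t = \<gamma>/2 * (exp (1 - t) - exp (1 + t))" for t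
    have Zalt: "Z = (\<lambda>t. exp t *\<^sub>R x0 + \<psi> t *\<^sub>R v)"
      unfolding Z_def \<psi>_def by (simp add: fun_eq_iff algebra_simps)
    have Zd: "(Z has_vector_derivative (Z s + w s)) (at s within {0..1})" if s: "s \<in> {0..1}" for s
    proof -
      have d\<psi>: "(\<psi> has_real_derivative (\<gamma>/2 * (- exp (1 - s) - exp (1 + s)))) (at s within {0..1})"
        unfolding \<psi>_def by (auto intro!: derivative_eq_intros)
      have DZ: "((\<lambda>t. exp t *\<^sub>R x0 + \<psi> t *\<^sub>R v) has_vector_derivative
          (exp s *\<^sub>R 0 + exp s *\<^sub>R x0) + (\<psi> s *\<^sub>R 0 + (\<gamma>/2 * (- exp (1 - s) - exp (1 + s))) *\<^sub>R v)) (at s within {0..1})"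
        by (rule has_vector_derivative_add[OF has_vector_derivative_scaleR[OF has_field_derivative_at_within[OF DERIV_exp] has_vector_derivative_const]
              has_vector_derivative_scaleR[OF d\<psi> has_vector_derivative_const]])
      have EQ: "(exp s *\<^sub>R 0 + exp s *\<^sub>R x0) + (\<psi> s *\<^sub>R 0 + (\<gamma>/2 * (- exp (1 - s) - exp (1 + s))) *\<^sub>R v) = Z s + w s"
      proof -
        have sc: "\<gamma>/2 * (- exp (1 - s) - exp (1 + s)) = - (\<gamma>/2 * exp (1 + s)) + \<gamma>/2 * exp (1 - s) + - (\<gamma> * exp (1 - s))"
          by (simp add: algebra_simps)
        have KV: "(\<gamma>/2 * (- exp (1 - s) - exp (1 + s))) *\<^sub>R v = - ((\<gamma>/2 * exp (1 + s)) *\<^sub>R v) + (\<gamma>/2 * exp (1 - s)) *\<^sub>R v + - ((\<gamma> * exp (1 - s)) *\<^sub>R v)"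
          unfolding sc by (simp only: scaleR_left.add scaleR_left.minus)
        show ?thesis unfolding Z_def wform[OF s] scaleR_zero_right add_0_left KV
          by (simp only: diff_conv_add_uminus add.assoc)
      qed
      show ?thesis using DZ unfolding EQ Zalt[symmetric] .
    qed
    have "X t = Z t"
      by (rule ode_uniq[of 0 1 X w Z, OF _ Xd Zd _ t]) (auto simp: X0 Z_def)
    then show "state ustar x0 0 t = exp t *\<^sub>R x0
        - (\<gamma>/2 * exp (1 + t)) *\<^sub>R (transpose A *v (A *v state ustar x0 0 1 - y1))
        + (\<gamma>/2 * exp (1 - t)) *\<^sub>R (transpose A *v (A *v state ustar x0 0 1 - y1))"
      unfolding Z_def v_def X_def by simp
  qed
qed

end
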